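(* Let $d$ be a non-negative integer, $Z$ a finite abelian group, $\mu$ the Haar probability measure on $\mathbb{T}^d\times Z$, and let $A,B\subset \mathbb{T}^d\times Z$ be closed sets. For a set $S\subset\mathbb{T}^d\times Z$ and positive integer $n$ let $S_n=S+\big([-\tfrac1n,\tfrac1n]^d\times\{0_Z\}\big)$. Then $\mu(A_n+B_n)\to\mu(A+B)$ as $n\to\infty$.
   Context: $\mathbb{T}=\mathbb{R}/\mathbb{Z}$, identified as a set with $[0,1)$. *)

theory Defs
  imports "HOL-Analysis.Analysis"
begin

text \<open>The circle T = R/Z is identified with [0,1). A point of T^d is an
  extensional function on {..<d} with values in [0,1) (undefined outside).\<close>

definition torus :: "nat \<Rightarrow> (nat \<Rightarrow> real) set" where
  "torus d = PiE {..<d} (\<lambda>_. {0..<1})"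

text \<open>Quotient map R^d -> T^d (R^d represented as nat => real, only the first d
  coordinates matter).\<close>
definition tproj :: "nat \<Rightarrow> (nat \<Rightarrow> real) \<Rightarrow> (nat \<Rightarrow> real)" where
  "tproj d v = restrict (\<lambda>i. frac (v i)) {..<d}"

definition gadd :: "nat \<Rightarrow> (nat \<Rightarrow> real) \<times> 'z::ab_group_add \<Rightarrow> (nat \<Rightarrow> real) \<times> 'z \<Rightarrow> (nat \<Rightarrow> real) \<times> 'z" where
  "gadd d p q = (tproj d (\<lambda>i. fst p i + fst q i), snd p + snd q)"

definition sumset :: "nat \<Rightarrow> ((nat \<Rightarrow> real) \<times> 'z::ab_group_add) set \<Rightarrow> ((nat \<Rightarrow> real) \<times> 'z) set \<Rightarrow> ((nat \<Rightarrow> real) \<times> 'z) set" where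
  "sumset d A B = {gadd d a b | a b. a \<in> A \<and> b \<in> B}"

definition box :: "nat \<Rightarrow> nat \<Rightarrow> ((nat \<Rightarrow> real) \<times> 'z::ab_group_add) set" where
  "box d n = {(tproj d e, 0) | e. \<forall>i<d. \<bar>e i\<bar> \<le> 1 / real n}"

definition thicken :: "nat \<Rightarrow> nat \<Rightarrow> ((nat \<Rightarrow> real) \<times> 'z::ab_group_add) set \<Rightarrow> ((nat \<Rightarrow> real) \<times> 'z) set" where
  "thicken d n S = sumset d S (box d n)"

text \<open>Closed subsets of T^d x Z (Z discrete): quotient topology, i.e. each fibre
  pulled back to R^d is closed (product topology on nat => real; only the
  first d coordinates are involved).\<close>
definition torus_closed :: "nat \<Rightarrow> ((nat \<Rightarrow> real) \<times> 'z) set \<Rightarrow> bool" where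
  "torus_closed d A \<longleftrightarrow> A \<subseteq> torus d \<times> UNIV \<and>
     (\<forall>z. closed {v :: nat \<Rightarrow> real. (tproj d v, z) \<in> A})"

definition haar :: "nat \<Rightarrow> ((nat \<Rightarrow> real) \<times> 'z::finite) measure" where
  "haar d = (PiM {..<d} (\<lambda>_. restrict_space lborel {0..<1::real}))
              \<Otimes>\<^sub>M uniform_count_measure (UNIV :: 'z set)"

end

theory Submission
  imports Defs "HOL-Probability.Probability"
begin

lemma tproj_apply: "tproj d v i = (if i < d then frac (v i) else undefined)"
  by (simp add: tproj_def)

lemma tproj_in: "tproj d v \<in> torus d"
  by (auto simp: tproj_def torus_def frac_lt_1)

lemma torus_tproj: "x \<in> torus d \<Longrightarrow> tproj d x = x"
  by (fastforce simp: tproj_def torus_def PiE_def extensional_def restrict_def fun_eq_iff Pi_def)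

lemma prob_unit: "prob_space (restrict_space lborel {0..<1::real})"
  by (rule prob_spaceI) (simp add: emeasure_restrict_space space_restrict_space)

lemma finite_haar: "finite_measure (haar d)"
proof -
  have "prob_space (haar d)" unfolding haar_def
    by (intro prob_space_pair prob_space_PiM prob_space_uniform_count_measure prob_unit) auto
  then show ?thesis by (metis prob_space_def)
qed

lemma space_Mt: "space (PiM {..<d::nat} (\<lambda>_. restrict_space lborel {0..<1::real})) = torus d"
  by (simp add: space_PiM space_restrict_space torus_def)

lemma coord_meas: "(\<lambda>x. x i) \<in> borel_measurable (PiM {..<d::nat} (\<lambda>_. restrict_space lborel {0..<1::real}))"
proof (cases "i < d")
  case True
  then have "(\<lambda>x. x i) \<in> measurable (PiM {..<d::nat} (\<lambda>_. restrict_space lborel {0..<1::real})) (restrict_space lborel {0..<1::real})"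
    by (intro measurable_component_singleton) auto
  then have "(\<lambda>x. x i) \<in> measurable (PiM {..<d::nat} (\<lambda>_. restrict_space lborel {0..<1::real})) lborel"
    by (simp add: measurable_restrict_space2_iff)
  then show ?thesis by simp
next
  case False
  show ?thesis
  proof (subst measurable_cong)
    fix w assume "w \<in> space (PiM {..<d::nat} (\<lambda>_. restrict_space lborel {0..<1::real}))"
    then show "w i = (\<lambda>_. undefined) w"
      using False by (auto simp: space_Mt torus_def PiE_def extensional_def)
  qed simp
qed

lemma id_meas: "(\<lambda>x. x) \<in> borel_measurable (PiM {..<d::nat} (\<lambda>_. restrict_space lborel {0..<1::real}))"
  using measurable_coordinatewise_then_product[of "\<lambda>x. x" "PiM {..<d::nat} (\<lambda>_. restrict_space lborel {0..<1::real})", OF coord_meas] .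

lemma closed_meas:
  fixes S :: "((nat \<Rightarrow> real) \<times> 'z::{ab_group_add,finite}) set"
  assumes "torus_closed d S"
  shows "S \<in> sets (haar d)"
proof -
  let ?M = "PiM {..<d::nat} (\<lambda>_. restrict_space lborel {0..<1::real})"
  have F0: "(\<lambda>x. x) -` {v. (tproj d v, z) \<in> S} \<inter> space ?M \<in> sets ?M" for z
    by (rule measurable_sets[OF id_meas]) (use assms in \<open>auto simp: torus_closed_def\<close>)
  have F: "{v. (tproj d v, z) \<in> S} \<inter> space ?M \<in> sets ?M" for z
    using F0[of z] by simp
  have P: "({v. (tproj d v, z) \<in> S} \<inter> space ?M) \<times> {z} \<in> sets (?M \<Otimes>\<^sub>M uniform_count_measure (UNIV::'z set))" for z
    by (rule pair_measureI[OF F]) simp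
  have eq: "S = (\<Union>z. ({v. (tproj d v, z) \<in> S} \<inter> space ?M) \<times> {z})"
    using assms by (auto simp: torus_closed_def space_Mt torus_tproj)
  have "(\<Union>z. ({v. (tproj d v, z) \<in> S} \<inter> space ?M) \<times> {z}) \<in> sets (?M \<Otimes>\<^sub>M uniform_count_measure (UNIV::'z set))"
    by (rule sets.finite_UN) (auto intro: P)
  then show ?thesis using eq unfolding haar_def by simp
qed

lemma tendsto_fun_iff:
  fixes f :: "'a \<Rightarrow> 'i \<Rightarrow> 'b::topological_space"
  shows "(f \<longlongrightarrow> l) F \<longleftrightarrow> (\<forall>i. ((\<lambda>x. f x i) \<longlongrightarrow> l i) F)"
  using limitin_componentwise[of "\<lambda>_. euclidean" UNIV f l F]
  by (simp add: euclidean_product_topology)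

lemma compact_PiE_UNIV: "compact (PiE UNIV (S::'i \<Rightarrow> 'b::topological_space set))" if "\<And>i. compact (S i)"
  using compactin_PiE[of "\<lambda>_. euclidean" UNIV S] that
  by (simp add: euclidean_product_topology)

lemma frac_eq_iff: "frac x = frac y \<longleftrightarrow> x - y \<in> \<int>"
proof -
  have "frac x = frac y \<longleftrightarrow> x - frac y \<in> \<int>" by (simp add: frac_unique_iff frac_lt_1)
  also have "x - frac y = (x - y) + of_int (floor y)" by (simp add: frac_def)
  also have "\<dots> \<in> \<int> \<longleftrightarrow> x - y \<in> \<int>"
    by (metis Ints_add Ints_diff Ints_of_int add_diff_cancel_right')
  finally show ?thesis .
qed

lemma frac_minus_Ints: "frac u - u \<in> \<int>"
  by (simp add: frac_def)

lemma tproj_cong: "(\<And>i. i < d \<Longrightarrow> frac (v i) = frac (w i)) \<Longrightarrow> tproj d v = tproj d w"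
  by (auto simp: tproj_def fun_eq_iff)

lemma tproj_eqD: "tproj d v = tproj d w \<Longrightarrow> i < d \<Longrightarrow> frac (v i) = frac (w i)"
  by (metis tproj_apply)

lemma fst_gadd: "i < d \<Longrightarrow> fst (gadd d p q) i = frac (fst p i + fst q i)"
  by (simp add: gadd_def tproj_apply)

lemma snd_gadd: "snd (gadd d p q) = snd p + snd q"
  by (simp add: gadd_def)

lemma gadd_in: "gadd d p q \<in> torus d \<times> UNIV"
  by (simp add: gadd_def tproj_in)

lemma sumset_sub: "sumset d A B \<subseteq> torus d \<times> UNIV"
  by (auto simp: sumset_def gadd_def tproj_in)

lemma torus_bounds: "x \<in> torus d \<Longrightarrow> i < d \<Longrightarrow> x i \<in> {0..<1}"
  and torus_out: "x \<in> torus d \<Longrightarrow> \<not> i < d \<Longrightarrow> x i = undefined"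
  by (auto simp: torus_def PiE_def extensional_def Pi_def)

lemma finite_subseq:
  fixes a :: "nat \<Rightarrow> 'z::finite"
  obtains z1 and r :: "nat \<Rightarrow> nat" where "strict_mono r" "\<And>k. a (r k) = z1"
proof -
  have "\<exists>z1. infinite {n. a n = z1}"
  proof (rule ccontr)
    assume "\<not> ?thesis"
    then have "finite (\<Union>z1. {n. a n = z1})" by auto
    moreover have "(\<Union>z1. {n. a n = z1}) = (UNIV :: nat set)" by auto
    ultimately show False by simp
  qed
  then obtain z1 where inf: "infinite {n. a n = z1}" by blast
  have sm: "strict_mono (Infinite_Set.enumerate {n. a n = z1})"
    using inf by (simp add: strict_mono_def enumerate_mono)
  show ?thesis
    using that[of "Infinite_Set.enumerate {n. a n = z1}" z1] sm enumerate_in_set[OF inf] by simp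
qed

lemma closed_limit:
  fixes C :: "'a::first_countable_topology set"
  assumes "closed C" "\<And>n. x n \<in> C" "x \<longlonglongrightarrow> l"
  shows "l \<in> C"
  using assms closed_sequential_limits by blast


definition Kd :: "nat \<Rightarrow> (nat \<Rightarrow> real) set" where
  "Kd d = PiE UNIV (\<lambda>i. if i < d then {0..1} else {undefined})"

lemma compact_Kd: "compact (Kd d)"
  unfolding Kd_def by (rule compact_PiE_UNIV) auto

lemma torus_Kd: "x \<in> torus d \<Longrightarrow> x \<in> Kd d"
  by (auto simp: Kd_def torus_def PiE_def Pi_def extensional_def)

lemma sumset_closed:
  fixes A B :: "((nat \<Rightarrow> real) \<times> 'z::{ab_group_add, finite}) set"
  assumes A: "torus_closed d A" and B: "torus_closed d B"
  shows "torus_closed d (sumset d A B)"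
  unfolding torus_closed_def
proof (intro conjI allI)
  show "sumset d A B \<subseteq> torus d \<times> UNIV" by (rule sumset_sub)
  fix z
  show "closed {v. (tproj d v, z) \<in> sumset d A B}"
    unfolding closed_sequential_limits
  proof (intro allI impI, elim conjE)
    fix x l assume xin: "\<forall>n. x n \<in> {v. (tproj d v, z) \<in> sumset d A B}" and lim: "x \<longlonglongrightarrow> l"
    have "\<forall>n. \<exists>pq. fst pq \<in> A \<and> snd pq \<in> B \<and> (tproj d (x n), z) = gadd d (fst pq) (snd pq)"
    proof
      fix n
      from xin have "(tproj d (x n), z) \<in> sumset d A B" by simp
      then obtain p q where "p \<in> A" "q \<in> B" "(tproj d (x n), z) = gadd d p q"
        unfolding sumset_def by blast
      then show "\<exists>pq. fst pq \<in> A \<and> snd pq \<in> B \<and> (tproj d (x n), z) = gadd d (fst pq) (snd pq)"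
        by (intro exI[of _ "(p, q)"]) simp
    qed
    from choice[OF this] obtain f where f: "\<forall>n. fst (f n) \<in> A \<and> snd (f n) \<in> B \<and> (tproj d (x n), z) = gadd d (fst (f n)) (snd (f n))"
      by blast
    define a where "a n = fst (f n)" for n
    define b where "b n = snd (f n)" for n
    have ab: "\<And>n. a n \<in> A" "\<And>n. b n \<in> B" "\<And>n. (tproj d (x n), z) = gadd d (a n) (b n)"
      using f by (simp_all add: a_def b_def)
    obtain z1 and r0 :: "nat \<Rightarrow> nat" where r0: "strict_mono r0" "\<And>k. snd (a (r0 k)) = z1"
      by (rule finite_subseq[of "\<lambda>n. snd (a n)"]) blast
    have Asub: "A \<subseteq> torus d \<times> UNIV" and Bsub: "B \<subseteq> torus d \<times> UNIV"
      using A B by (auto simp: torus_closed_def)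
    have fa: "fst (a n) \<in> torus d" "fst (b n) \<in> torus d" for n
      using subsetD[OF Asub ab(1)] subsetD[OF Bsub ab(2)] by (simp_all add: mem_Times_iff)
    define F where "F k = (fst (a (r0 k)), fst (b (r0 k)))" for k
    have sc: "seq_compact (Kd d \<times> Kd d)"
      by (intro compact_imp_seq_compact compact_Times compact_Kd)
    have mem: "\<And>k. F k \<in> Kd d \<times> Kd d"
      using fa torus_Kd by (simp add: F_def)
    from mp[OF sc[unfolded seq_compact_def, THEN spec[where x=F]]] mem
    obtain lp and r :: "nat \<Rightarrow> nat" where r: "strict_mono r" "(F \<circ> r) \<longlonglongrightarrow> lp"
      by blast
    define \<alpha> where "\<alpha> = fst lp"
    define \<beta> where "\<beta> = snd lp"
    define s where "s = r0 \<circ> r"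
    have s: "strict_mono s" using r r0 by (simp add: s_def strict_mono_o)
    have la: "(\<lambda>k. fst (a (s k))) \<longlonglongrightarrow> \<alpha>" and lb: "(\<lambda>k. fst (b (s k))) \<longlonglongrightarrow> \<beta>"
      using tendsto_fst[OF r(2)] tendsto_snd[OF r(2)] by (simp_all add: s_def o_def \<alpha>_def \<beta>_def F_def)
    have lx: "(\<lambda>k. x (s k)) \<longlonglongrightarrow> l"
      using LIMSEQ_subseq_LIMSEQ[OF lim s] by (simp add: o_def)
    have sa: "snd (a (s k)) = z1" for k using r0 by (simp add: s_def)
    have sb: "snd (b (s k)) = z - z1" for k
      using arg_cong[OF ab(3)[of "s k"], of snd] sa[of k] by (simp add: snd_gadd algebra_simps)
    have "\<alpha> \<in> {v. (tproj d v, z1) \<in> A}"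
    proof (rule closed_limit[OF _ _ la])
      show "closed {v. (tproj d v, z1) \<in> A}" using A by (simp add: torus_closed_def)
      fix k show "fst (a (s k)) \<in> {v. (tproj d v, z1) \<in> A}"
      proof -
        have "(tproj d (fst (a (s k))), z1) = a (s k)" using torus_tproj[OF fa(1)] sa[of k] by (simp add: prod_eq_iff)
        then show ?thesis using ab(1)[of "s k"] by simp
      qed
    qed
    moreover have "\<beta> \<in> {v. (tproj d v, z - z1) \<in> B}"
    proof (rule closed_limit[OF _ _ lb])
      show "closed {v. (tproj d v, z - z1) \<in> B}" using B by (simp add: torus_closed_def)
      fix k show "fst (b (s k)) \<in> {v. (tproj d v, z - z1) \<in> B}"
      proof -
        have "(tproj d (fst (b (s k))), z - z1) = b (s k)" using torus_tproj[OF fa(2)] sb[of k] by (simp add: prod_eq_iff)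
        then show ?thesis using ab(2)[of "s k"] by simp
      qed
    qed
    moreover have "(tproj d l, z) = gadd d (tproj d \<alpha>, z1) (tproj d \<beta>, z - z1)"
    proof -
      have "tproj d l = tproj d (\<lambda>i. tproj d \<alpha> i + tproj d \<beta> i)"
      proof (rule tproj_cong)
        fix i assume i: "i < d"
        have int: "x (s k) i - fst (a (s k)) i - fst (b (s k)) i \<in> \<int>" for k
        proof -
          have "frac (x (s k) i) = fst (gadd d (a (s k)) (b (s k))) i"
            using arg_cong[OF ab(3)[of "s k"], of "\<lambda>p. fst p i"] i by (simp add: tproj_apply)
          also have "\<dots> = frac (fst (a (s k)) i + fst (b (s k)) i)" using i by (simp add: fst_gadd)
          finally show ?thesis by (simp add: frac_eq_iff algebra_simps)
        qed
        have "(\<lambda>k. x (s k) i - fst (a (s k)) i - fst (b (s k)) i) \<longlonglongrightarrow> l i - \<alpha> i - \<beta> i"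
          using lx la lb by (intro tendsto_diff) (auto simp: tendsto_fun_iff)
        then have li: "l i - \<alpha> i - \<beta> i \<in> \<int>"
          by (rule closed_limit[OF closed_Ints int, rotated])
        have "frac (l i) = frac (\<alpha> i + \<beta> i)"
          using li by (simp add: frac_eq_iff diff_diff_eq)
        then show "frac (l i) = frac (tproj d \<alpha> i + tproj d \<beta> i)"
          using i by (simp add: tproj_apply)
      qed
      then show ?thesis by (simp add: gadd_def)
    qed
    ultimately show "l \<in> {v. (tproj d v, z) \<in> sumset d A B}"
      by (auto simp: sumset_def)
  qed
qed


definition Kb :: "nat \<Rightarrow> nat \<Rightarrow> (nat \<Rightarrow> real) set" where
  "Kb d n = PiE UNIV (\<lambda>i. if i < d then {-(1/real n)..1/real n} else {0})"

lemma compact_Kb: "compact (Kb d n)"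
  unfolding Kb_def by (rule compact_PiE_UNIV) auto

lemma box_closed: "torus_closed d (box d n :: ((nat \<Rightarrow> real) \<times> 'z::ab_group_add) set)"
  unfolding torus_closed_def
proof (intro conjI allI)
  show "(box d n :: ((nat \<Rightarrow> real) \<times> 'z) set) \<subseteq> torus d \<times> UNIV"
    by (auto simp: box_def tproj_in)
  fix z :: 'z
  show "closed {v. (tproj d v, z) \<in> (box d n :: ((nat \<Rightarrow> real) \<times> 'z) set)}"
    unfolding closed_sequential_limits
  proof (intro allI impI, elim conjE)
    fix x l assume xin: "\<forall>k. x k \<in> {v. (tproj d v, z) \<in> (box d n :: ((nat \<Rightarrow> real) \<times> 'z) set)}"
      and lim: "x \<longlonglongrightarrow> l"
    have "\<forall>k. \<exists>e. (\<forall>i<d. \<bar>e i\<bar> \<le> 1 / real n) \<and> tproj d (x k) = tproj d e \<and> z = 0"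
      using xin by (auto simp: box_def)
    from choice[OF this] obtain e where e: "\<And>k. \<forall>i<d. \<bar>e k i\<bar> \<le> 1 / real n"
      "\<And>k. tproj d (x k) = tproj d (e k)" "z = 0" by blast
    define e' where "e' k = (\<lambda>i. if i < d then e k i else 0)" for k
    have mem: "\<And>k. e' k \<in> Kb d n"
    proof -
      fix k show "e' k \<in> Kb d n" using e(1)[of k] by (auto simp: Kb_def e'_def abs_le_iff)
    qed
    have sc: "seq_compact (Kb d n)" by (intro compact_imp_seq_compact compact_Kb)
    from mp[OF sc[unfolded seq_compact_def, THEN spec[where x=e']]] mem
    obtain \<epsilon> and r :: "nat \<Rightarrow> nat" where r: "\<epsilon> \<in> Kb d n" "strict_mono r" "(e' \<circ> r) \<longlonglongrightarrow> \<epsilon>"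
      by blast
    have lx: "(\<lambda>k. x (r k)) \<longlonglongrightarrow> l"
      using LIMSEQ_subseq_LIMSEQ[OF lim r(2)] by (simp add: o_def)
    have "tproj d l = tproj d \<epsilon>"
    proof (rule tproj_cong)
      fix i assume i: "i < d"
      have int: "x (r k) i - e' (r k) i \<in> \<int>" for k
        using tproj_eqD[OF e(2)[of "r k"] i] i by (simp add: e'_def frac_eq_iff)
      have "(\<lambda>k. x (r k) i - e' (r k) i) \<longlonglongrightarrow> l i - \<epsilon> i"
        using lx r(3) by (intro tendsto_diff) (auto simp: tendsto_fun_iff o_def)
      then have "l i - \<epsilon> i \<in> \<int>"
        by (rule closed_limit[OF closed_Ints int, rotated])
      then show "frac (l i) = frac (\<epsilon> i)" by (simp add: frac_eq_iff)
    qed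
    moreover have "\<forall>i<d. \<bar>\<epsilon> i\<bar> \<le> 1 / real n"
    proof (intro allI impI)
      fix i assume "i < d"
      then have "\<epsilon> i \<in> {-(1/real n)..1/real n}"
        using PiE_mem[OF r(1)[unfolded Kb_def], of i] by simp
      then show "\<bar>\<epsilon> i\<bar> \<le> 1 / real n" by (simp add: abs_le_iff)
    qed
    ultimately show "l \<in> {v. (tproj d v, z) \<in> (box d n :: ((nat \<Rightarrow> real) \<times> 'z) set)}"
      using e(3) by (auto simp: box_def)
  qed
qed

lemma sumset_mono: "A \<subseteq> A' \<Longrightarrow> B \<subseteq> B' \<Longrightarrow> sumset d A B \<subseteq> sumset d A' B'"
  unfolding sumset_def by blast

lemma box_mono: "box d (Suc (Suc n)) \<subseteq> box d (Suc n)"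
proof -
  have "1 / real (Suc (Suc n)) \<le> 1 / real (Suc n)" by (simp add: frac_le)
  then show ?thesis by (force simp: box_def)
qed

lemma zero_box: "(tproj d (\<lambda>_. 0), 0) \<in> box d n"
  by (auto simp: box_def)

lemma gadd_zero: "p \<in> torus d \<times> UNIV \<Longrightarrow> gadd d p (tproj d (\<lambda>_. 0), 0) = p"
proof -
  assume p: "p \<in> torus d \<times> UNIV"
  have "tproj d (\<lambda>i. fst p i + tproj d (\<lambda>_. 0) i) = tproj d (fst p)"
    by (rule tproj_cong) (simp add: tproj_apply)
  also have "\<dots> = fst p" using p by (simp add: torus_tproj mem_Times_iff)
  finally show ?thesis by (simp add: gadd_def prod_eq_iff)
qed

lemma sub_thicken: "A \<subseteq> torus d \<times> UNIV \<Longrightarrow> A \<subseteq> thicken d n A"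
proof
  fix a assume "A \<subseteq> torus d \<times> UNIV" "a \<in> A"
  then have "a = gadd d a (tproj d (\<lambda>_. 0), 0)" by (simp add: gadd_zero subsetD)
  then show "a \<in> thicken d n A" unfolding thicken_def sumset_def using \<open>a \<in> A\<close> zero_box by blast
qed


lemma two_over: "(\<lambda>n. 2 / real (Suc n)) \<longlonglongrightarrow> 0"
  using tendsto_mult[OF tendsto_const LIMSEQ_inverse_real_of_nat, of 2] by (simp add: divide_inverse)

lemma inter_sub:
  fixes A B :: "((nat \<Rightarrow> real) \<times> 'z::{ab_group_add, finite}) set"
  assumes A: "torus_closed d A" and B: "torus_closed d B"
  assumes x: "\<And>n. x \<in> sumset d (thicken d (Suc n) A) (thicken d (Suc n) B)"
  shows "x \<in> sumset d A B"
proof -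
  have TC: "torus_closed d (sumset d A B)" by (rule sumset_closed[OF A B])
  have xt: "fst x \<in> torus d" using sumset_sub x[of 0] by (force simp: mem_Times_iff)
  define x0 where "x0 = (\<lambda>i. if i < d then fst x i else 0)"
  have "\<forall>n. \<exists>w. (tproj d w, snd x) \<in> sumset d A B \<and> (\<forall>i. \<bar>w i - x0 i\<bar> \<le> 2 / real (Suc n))"
  proof
    fix n
    from x[of n] obtain p q where pq: "p \<in> thicken d (Suc n) A" "q \<in> thicken d (Suc n) B" "x = gadd d p q"
      unfolding sumset_def by blast
    from pq(1) obtain a e where ae: "a \<in> A" "e \<in> box d (Suc n)" "p = gadd d a e"
      unfolding thicken_def sumset_def by blast
    from pq(2) obtain b f where bf: "b \<in> B" "f \<in> box d (Suc n)" "q = gadd d b f"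
      unfolding thicken_def sumset_def by blast
    from ae(2) obtain \<epsilon> where eps: "e = (tproj d \<epsilon>, 0)" "\<forall>i<d. \<bar>\<epsilon> i\<bar> \<le> 1 / real (Suc n)"
      unfolding box_def by blast
    from bf(2) obtain \<phi> where phi: "f = (tproj d \<phi>, 0)" "\<forall>i<d. \<bar>\<phi> i\<bar> \<le> 1 / real (Suc n)"
      unfolding box_def by blast
    define w where "w = (\<lambda>i. if i < d then fst x i - \<epsilon> i - \<phi> i else 0)"
    have "tproj d w = fst (gadd d a b)"
      unfolding gadd_def fst_conv
    proof (rule tproj_cong)
      fix i assume i: "i < d"
      define P where "P = fst p i"
      define Q where "Q = fst q i"
      have xi: "fst x i = frac (P + Q)" using i by (simp add: pq(3) fst_gadd P_def Q_def)
      have Pi: "P = frac (fst a i + frac (\<epsilon> i))" using i by (simp add: P_def ae(3) eps(1) fst_gadd tproj_apply)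
      have Qi: "Q = frac (fst b i + frac (\<phi> i))" using i by (simp add: Q_def bf(3) phi(1) fst_gadd tproj_apply)
      have eq: "w i - (fst a i + fst b i) = (frac (P + Q) - (P + Q)) + (frac (fst a i + frac (\<epsilon> i)) - (fst a i + frac (\<epsilon> i)))
          + (frac (\<epsilon> i) - \<epsilon> i) + (frac (fst b i + frac (\<phi> i)) - (fst b i + frac (\<phi> i))) + (frac (\<phi> i) - \<phi> i)"
        using i xi Pi Qi by (simp add: w_def)
      have "w i - (fst a i + fst b i) \<in> \<int>"
        unfolding eq by (intro Ints_add frac_minus_Ints)
      then show "frac (w i) = frac (fst a i + fst b i)" by (simp add: frac_eq_iff)
    qed
    moreover have "snd x = snd (gadd d a b)"
      by (simp add: pq(3) ae(3) bf(3) eps(1) phi(1) snd_gadd)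
    ultimately have "(tproj d w, snd x) = gadd d a b" by (simp add: prod_eq_iff)
    then have "(tproj d w, snd x) \<in> sumset d A B"
      using ae(1) bf(1) unfolding sumset_def by blast
    moreover have "\<bar>w i - x0 i\<bar> \<le> 2 / real (Suc n)" for i
    proof (cases "i < d")
      case True
      have "\<bar>w i - x0 i\<bar> = \<bar>\<epsilon> i + \<phi> i\<bar>" using True by (simp add: w_def x0_def)
      also have "\<dots> \<le> 1 / real (Suc n) + 1 / real (Suc n)"
        using eps(2) phi(2) True by (meson abs_triangle_ineq add_mono order_trans)
      finally show ?thesis by simp
    qed (simp add: w_def x0_def)
    ultimately show "\<exists>w. (tproj d w, snd x) \<in> sumset d A B \<and> (\<forall>i. \<bar>w i - x0 i\<bar> \<le> 2 / real (Suc n))"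
      by blast
  qed
  from choice[OF this] obtain w where w: "\<And>n. (tproj d (w n), snd x) \<in> sumset d A B"
    "\<And>n i. \<bar>w n i - x0 i\<bar> \<le> 2 / real (Suc n)" by blast
  have lim: "w \<longlonglongrightarrow> x0"
    unfolding tendsto_fun_iff
  proof
    fix i
    have "(\<lambda>n. w n i - x0 i) \<longlonglongrightarrow> 0"
      by (rule Lim_null_comparison[OF _ two_over]) (use w(2) in \<open>auto intro: always_eventually\<close>)
    then show "(\<lambda>n. w n i) \<longlonglongrightarrow> x0 i" by (rule LIM_zero_cancel)
  qed
  have "x0 \<in> {v. (tproj d v, snd x) \<in> sumset d A B}"
    by (rule closed_limit[OF _ _ lim]) (use TC w(1) in \<open>auto simp: torus_closed_def\<close>)
  moreover have "tproj d x0 = fst x"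
  proof -
    have "tproj d x0 = tproj d (fst x)" by (rule tproj_cong) (simp add: x0_def)
    then show ?thesis using torus_tproj[OF xt] by simp
  qed
  ultimately show ?thesis by simp
qed

theorem lemma2p7:
  fixes d :: nat
    and A B :: "((nat \<Rightarrow> real) \<times> 'z::{ab_group_add, finite}) set"
  assumes "torus_closed d A" and "torus_closed d B"
  shows "(\<lambda>n. measure (haar d) (sumset d (thicken d (Suc n) A) (thicken d (Suc n) B)))
           \<longlonglongrightarrow> measure (haar d) (sumset d A B)"
proof -
  define S where "S n = sumset d (thicken d (Suc n) A) (thicken d (Suc n) B)" for n
  have tc: "torus_closed d (thicken d m C)" if "torus_closed d C" for m and C :: "((nat \<Rightarrow> real) \<times> 'z) set"
    unfolding thicken_def by (rule sumset_closed[OF that box_closed])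
  have rng: "range S \<subseteq> sets (haar d)"
    unfolding S_def by (auto intro!: closed_meas sumset_closed tc assms)
  have dec: "decseq S"
  proof (rule decseq_SucI)
    fix n
    have "thicken d (Suc (Suc n)) C \<subseteq> thicken d (Suc n) C" for C :: "((nat \<Rightarrow> real) \<times> 'z) set"
      unfolding thicken_def by (rule sumset_mono[OF order_refl box_mono])
    then show "S (Suc n) \<subseteq> S n" unfolding S_def by (intro sumset_mono)
  qed
  have Asub: "A \<subseteq> torus d \<times> UNIV" and Bsub: "B \<subseteq> torus d \<times> UNIV"
    using assms by (auto simp: torus_closed_def)
  have "(\<Inter>n. S n) = sumset d A B"
  proof
    show "(\<Inter>n. S n) \<subseteq> sumset d A B"
      using inter_sub[OF assms] unfolding S_def by blast
    show "sumset d A B \<subseteq> (\<Inter>n. S n)"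
      unfolding S_def using sumset_mono[OF sub_thicken[OF Asub] sub_thicken[OF Bsub]] by blast
  qed
  moreover have "(\<lambda>n. measure (haar d) (S n)) \<longlonglongrightarrow> measure (haar d) (\<Inter>n. S n)"
    by (rule finite_measure.finite_Lim_measure_decseq[OF finite_haar rng dec])
  ultimately show ?thesis unfolding S_def by simp
qed

end
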